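(* Let $(\varphi_k)_{k\ge0}$ be nonnegative weights with $\varphi_0>0$. Let $\mathcal M=\Psi\circ\Phi$ be the map (defined in the context) from increasing diamonds of size $n$ to ordered increasing bucket trees of size $n$ with bucket size $2$. Then for every increasing diamond $F$, the number of inner nodes of $F$ equals the number of nodes of capacity one in $\mathcal M(F)$. Consequently, if $I_n$ denotes the number of inner nodes of a random increasing diamond of size $n$ and $N_n$ the number of capacity-one nodes of a random ordered increasing bucket tree of size $n$ with bucket size 2 (both chosen with probability proportional to weight, with $\psi_1=1$), then $I_n$ and $N_n$ are equal in distribution for every $n\ge1$.
   Context: Increasing diamonds are defined recursively on a finite set $L$ of integer labels: if $|L|=1$ it is a single vertex with that label (weight 1); if $|L|\ge2$ it consists of a source vertex labelled $\min L$, a sink vertex labelled $\max L$, and an ordered sequence $(F_1,\dots,F_r)$, $r\ge0$, of increasing diamonds whose label sets partition $L\setminus\{\min L,\max L\}$, with weight $\varphi_r\prod_i w(F_i)$; size is $|L|$. Node types: if $|L|=1$ its unique vertex is an inner node; otherwise the source is a small node, the sink a large node, and the types of the vertices of $F_1,\dots,F_r$ are assigned recursively. Ordered increasing bucket trees with $b=2$: plane rooted trees whose nodes have capacity 1 or 2 (nodes with children have capacity 2), labels $1,\dots,n$ distributed with each node holding as many labels as its capacity and every label of a node smaller than the labels in its children; weight = product of $\varphi_{d^+(v)}$ over capacity-2 nodes ($d^+(v)$ = number of children), capacity-1 nodes have weight $\psi_1=1$. The map $\mathcal M$: First $\Phi$: if $F$ has one vertex, $\Phi(F)$ is a single bucket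 containing its label; otherwise $\Phi(F)$ has root bucket containing $\min L$ and $\max L$, with ordered subtrees $\Phi(F_1),\dots,\Phi(F_r)$. Then $\Psi$ applied to a bucket-labelled plane tree $\hat T$: if its size is 1, return it; otherwise let $\ell_1<\dots<\ell_n$ be its labels, relabel every label by the permutation fixing $\ell_1$ and mapping $\ell_2\mapsto\ell_3\mapsto\cdots\mapsto\ell_n\mapsto\ell_2$, then keep the root bucket and replace each root subtree $\hat T_i$ (in order) by $\Psi(\hat T_i)$. *)

theory Defs
  imports Complex_Main
begin

text \<open>DSingle a : a single (inner) vertex labelled a.
  Dia a b Fs : source labelled a, sink labelled b, ordered sequence Fs of sub-diamonds.\<close>
datatype diamond = DSingle int | Dia int int "diamond list"

fun dlabels :: "diamond \<Rightarrow> int set" where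
  "dlabels (DSingle a) = {a}"
| "dlabels (Dia a b Fs) = {a, b} \<union> (\<Union>F\<in>set Fs. dlabels F)"

fun is_diamond :: "diamond \<Rightarrow> bool" where
  "is_diamond (DSingle a) = True"
| "is_diamond (Dia a b Fs) =
     (a < b \<and>
      (\<forall>F\<in>set Fs. \<forall>x\<in>dlabels F. a < x \<and> x < b) \<and>
      (\<forall>i<length Fs. \<forall>j<length Fs. i \<noteq> j \<longrightarrow> dlabels (Fs ! i) \<inter> dlabels (Fs ! j) = {}) \<and>
      (\<forall>F\<in>set Fs. is_diamond F))"

fun dweight :: "(nat \<Rightarrow> real) \<Rightarrow> diamond \<Rightarrow> real" where
  "dweight \<phi> (DSingle a) = 1"
| "dweight \<phi> (Dia a b Fs) = \<phi> (length Fs) * prod_list (map (dweight \<phi>) Fs)"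

fun inner_nodes :: "diamond \<Rightarrow> nat" where
  "inner_nodes (DSingle a) = 1"
| "inner_nodes (Dia a b Fs) = sum_list (map inner_nodes Fs)"

definition diamonds_of_size :: "nat \<Rightarrow> diamond set" where
  "diamonds_of_size n = {F. is_diamond F \<and> dlabels F = {1..int n}}"

text \<open>BNode B ts : a node whose bucket holds the label set B, with ordered children ts.
  The capacity of a node is the number of labels it holds.\<close>
datatype btree = BNode "int set" "btree list"

fun blabels :: "btree \<Rightarrow> int set" where
  "blabels (BNode B ts) = B \<union> (\<Union>t\<in>set ts. blabels t)"

fun bmap :: "(int \<Rightarrow> int) \<Rightarrow> btree \<Rightarrow> btree" where
  "bmap f (BNode B ts) = BNode (f ` B) (map (bmap f) ts)"

lemma size_bmap[simp]: "size (bmap f t) = size t"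
proof (induction t)
  case (BNode B ts)
  have "map (size \<circ> bmap f) ts = map size ts" using BNode.IH by auto
  then have "size_list size (map (bmap f) ts) = size_list size ts"
    by (metis size_list_map size_list_conv_sum_list)
  then show ?case by simp
qed

fun is_bucket_tree :: "btree \<Rightarrow> bool" where
  "is_bucket_tree (BNode B ts) =
     ((card B = 1 \<or> card B = 2) \<and>
      (ts \<noteq> [] \<longrightarrow> card B = 2) \<and>
      (\<forall>t\<in>set ts. \<forall>x\<in>B. \<forall>y\<in>blabels t. x < y) \<and>
      (\<forall>i<length ts. \<forall>j<length ts. i \<noteq> j \<longrightarrow> blabels (ts ! i) \<inter> blabels (ts ! j) = {}) \<and>
      (\<forall>t\<in>set ts. is_bucket_tree t))"

fun bweight :: "(nat \<Rightarrow> real) \<Rightarrow> btree \<Rightarrow> real" where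
  "bweight \<phi> (BNode B ts) =
     (if card B = 2 then \<phi> (length ts) else 1) * prod_list (map (bweight \<phi>) ts)"

fun cap_one_nodes :: "btree \<Rightarrow> nat" where
  "cap_one_nodes (BNode B ts) = (if card B = 1 then 1 else 0) + sum_list (map cap_one_nodes ts)"

definition bucket_trees_of_size :: "nat \<Rightarrow> btree set" where
  "bucket_trees_of_size n = {T. is_bucket_tree T \<and> blabels T = {1..int n}}"

fun Phi :: "diamond \<Rightarrow> btree" where
  "Phi (DSingle a) = BNode {a} []"
| "Phi (Dia a b Fs) = BNode {a, b} (map Phi Fs)"

text \<open>For a finite label set with sorted elements l1 < l2 < ... < ln, the permutation fixing
  l1 and mapping l2 -> l3 -> ... -> ln -> l2.\<close>
definition cyc_perm :: "int set \<Rightarrow> int \<Rightarrow> int" where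
  "cyc_perm S x =
     (let ys = tl (sorted_list_of_set S) in
      case map_of (zip ys (rotate1 ys)) x of None \<Rightarrow> x | Some y \<Rightarrow> y)"

function Psi :: "btree \<Rightarrow> btree" where
  "Psi (BNode B ts) =
     (if card (blabels (BNode B ts)) = 1 then BNode B ts
      else (let \<sigma> = cyc_perm (blabels (BNode B ts))
            in BNode (\<sigma> ` B) (map (\<lambda>t. Psi (bmap \<sigma> t)) ts)))"
  by pat_completeness auto
termination
  by (relation "measure size") (auto intro!: le_imp_less_Suc size_list_estimation')

definition M :: "diamond \<Rightarrow> btree" where
  "M F = Psi (Phi F)"

end

theory Submission
  imports Defs
begin


lemma cyc_perm_inj: "inj (cyc_perm S)"
proof (rule injI)
  fix x y assume eq: "cyc_perm S x = cyc_perm S y"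
  define ys where "ys = tl (sorted_list_of_set S)"
  have d: "distinct ys" unfolding ys_def by (simp add: distinct_tl)
  have len: "length ys = length (rotate1 ys)" by simp
  have cdef: "cyc_perm S z = (case map_of (zip ys (rotate1 ys)) z of None \<Rightarrow> z | Some y \<Rightarrow> y)" for z
    unfolding cyc_perm_def ys_def Let_def by simp
  have c: "cyc_perm S z = (if z \<in> set ys then rotate1 ys ! (SOME i. i < length ys \<and> ys ! i = z) else z)" for z
  proof (cases "z \<in> set ys")
    case True
    then obtain i where i: "i < length ys" "ys ! i = z" by (auto simp: in_set_conv_nth)
    have "(SOME i. i < length ys \<and> ys ! i = z) = i"
      using i d by (metis (mono_tags, lifting) nth_eq_iff_index_eq someI_ex)
    moreover have "map_of (zip ys (rotate1 ys)) z = Some (rotate1 ys ! i)"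
      using map_of_zip_nth[OF len d] i by auto
    ultimately show ?thesis using True cdef by simp
  next
    case False
    then have "map_of (zip ys (rotate1 ys)) z = None" using len by simp
    then show ?thesis using False cdef by (metis option.case(1))
  qed
  have mem: "z \<in> set ys \<Longrightarrow> rotate1 ys ! (SOME i. i < length ys \<and> ys ! i = z) \<in> set ys
     \<and> (SOME i. i < length ys \<and> ys ! i = z) < length ys \<and> ys ! (SOME i. i < length ys \<and> ys ! i = z) = z" for z
  proof -
    assume "z \<in> set ys"
    then have "\<exists>i. i < length ys \<and> ys ! i = z" by (auto simp: in_set_conv_nth)
    then have "(SOME i. i < length ys \<and> ys ! i = z) < length ys \<and> ys ! (SOME i. i < length ys \<and> ys ! i = z) = z"
      by (rule someI_ex)
    then show ?thesis by (metis length_rotate1 nth_mem set_rotate1)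
  qed
  show "x = y"
  proof (cases "x \<in> set ys"; cases "y \<in> set ys")
    assume a: "x \<in> set ys" "y \<in> set ys"
    define i where "i = (SOME i. i < length ys \<and> ys ! i = x)"
    define j where "j = (SOME i. i < length ys \<and> ys ! i = y)"
    have ij: "i < length ys" "ys ! i = x" "j < length ys" "ys ! j = y"
      using mem[OF a(1)] mem[OF a(2)] unfolding i_def j_def by auto
    have "rotate1 ys ! i = rotate1 ys ! j"
      using eq a unfolding c i_def j_def by simp
    moreover have "distinct (rotate1 ys)" using d by simp
    ultimately have "i = j" using ij nth_eq_iff_index_eq[of "rotate1 ys" i j] by simp
    then show ?thesis using ij by simp
  next
    assume a: "x \<in> set ys" "y \<notin> set ys"
    then show ?thesis using eq c mem[OF a(1)] by auto
  next
    assume a: "x \<notin> set ys" "y \<in> set ys"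
    then show ?thesis using eq c mem[OF a(2)] by auto
  next
    assume a: "x \<notin> set ys" "y \<notin> set ys"
    then show ?thesis using eq c by auto
  qed
qed

lemma cap_bmap0: "inj_on f (blabels t) \<Longrightarrow> cap_one_nodes (bmap f t) = cap_one_nodes t"
proof (induction t)
  case (BNode B ts)
  have "card (f ` B) = card B" using BNode.prems by (auto intro: card_image inj_on_subset)
  moreover have e: "map (cap_one_nodes \<circ> bmap f) ts = map cap_one_nodes ts"
    using BNode by (intro map_cong) (auto intro: inj_on_subset)
  ultimately show ?case by (simp add: e)
qed

lemma Psi_cap: "cap_one_nodes (Psi t) = cap_one_nodes t"
proof (induction t rule: Psi.induct)
  case (1 B ts)
  show ?case
  proof (cases "card (blabels (BNode B ts)) = 1")
    case True then show ?thesis by simp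
  next
    case False
    define \<sigma> where "\<sigma> = cyc_perm (blabels (BNode B ts))"
    have inj: "inj \<sigma>" unfolding \<sigma>_def by (rule cyc_perm_inj)
    have pe: "Psi (BNode B ts) = BNode (\<sigma> ` B) (map (\<lambda>t. Psi (bmap \<sigma> t)) ts)"
      using False by (simp add: \<sigma>_def Let_def)
    have cd: "card (\<sigma> ` B) = card B" using inj by (simp add: card_image inj_on_subset)
    have e: "map (cap_one_nodes \<circ> (\<lambda>t. Psi (bmap \<sigma> t))) ts = map cap_one_nodes ts"
      using 1[OF False \<sigma>_def] inj by (intro map_cong) (auto intro: cap_bmap0 inj_on_subset)
    show ?thesis unfolding pe cap_one_nodes.simps map_map cd e ..
  qed
qed

lemma Phi_cap: "is_diamond F \<Longrightarrow> inner_nodes F = cap_one_nodes (Phi F)"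
proof (induction F)
  case (DSingle a) then show ?case by simp
next
  case (Dia a b Fs)
  have e: "map inner_nodes Fs = map (cap_one_nodes \<circ> Phi) Fs" using Dia by (intro map_cong) auto
  then show ?case using Dia.prems by (simp add: e)
qed

lemma part1: "is_diamond F \<Longrightarrow> inner_nodes F = cap_one_nodes (M F)"
  by (simp add: M_def Psi_cap Phi_cap)



definition succL :: "int set \<Rightarrow> int \<Rightarrow> int" where "succL L x = Min {y\<in>L. x < y}"
definition predL :: "int set \<Rightarrow> int \<Rightarrow> int" where "predL L x = Max {y\<in>L. y < x}"
definition smono :: "int set \<Rightarrow> (int \<Rightarrow> int) \<Rightarrow> bool" where
  "smono A f \<longleftrightarrow> (\<forall>x\<in>A. \<forall>y\<in>A. x < y \<longrightarrow> f x < f y)"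

lemma succL_props:
  assumes "finite L" "x \<in> L" "y \<in> L" "x < y"
  shows "succL L x \<in> L" "x < succL L x" "succL L x \<le> y"
proof -
  have ne: "{z\<in>L. x < z} \<noteq> {}" "finite {z\<in>L. x < z}" using assms by auto
  show "succL L x \<in> L" "x < succL L x" using Min_in[OF ne(2) ne(1)] unfolding succL_def by auto
  show "succL L x \<le> y" unfolding succL_def using assms by (intro Min_le) auto
qed

lemma predL_props:
  assumes "finite L" "x \<in> L" "y \<in> L" "x < y"
  shows "predL L y \<in> L" "predL L y < y" "x \<le> predL L y"
proof -
  have ne: "{z\<in>L. z < y} \<noteq> {}" "finite {z\<in>L. z < y}" using assms by auto
  show "predL L y \<in> L" "predL L y < y" using Max_in[OF ne(2) ne(1)] unfolding predL_def by auto
  show "x \<le> predL L y" unfolding predL_def using assms by (intro Max_ge) auto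
qed

lemma pred_succ:
  assumes "finite L" "x \<in> L" "y \<in> L" "x < y"
  shows "predL L (succL L x) = x"
proof -
  note s = succL_props[OF assms]
  show ?thesis unfolding predL_def
  proof (rule Max_eqI)
    show "finite {z \<in> L. z < succL L x}" using assms by auto
    show "x \<in> {z \<in> L. z < succL L x}" using s assms by auto
    fix z assume "z \<in> {z \<in> L. z < succL L x}"
    then show "z \<le> x" using succL_props(3)[OF assms(1,2)] by force
  qed
qed

lemma succ_pred:
  assumes "finite L" "x \<in> L" "y \<in> L" "x < y"
  shows "succL L (predL L y) = y"
proof -
  note s = predL_props[OF assms]
  show ?thesis unfolding succL_def
  proof (rule Min_eqI)
    show "finite {z \<in> L. predL L y < z}" using assms by auto
    show "y \<in> {z \<in> L. predL L y < z}" using s assms by auto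
    fix z assume "z \<in> {z \<in> L. predL L y < z}"
    then show "y \<le> z" using predL_props(3)[OF assms(1) _ assms(3)] by force
  qed
qed

definition lowL :: "int set \<Rightarrow> int set" where "lowL L = {x\<in>L. \<exists>y\<in>L. x < y}"
definition highL :: "int set \<Rightarrow> int set" where "highL L = {y\<in>L. \<exists>x\<in>L. x < y}"

lemma smono_inj: "smono A f \<Longrightarrow> inj_on f A"
  unfolding smono_def inj_on_def by (metis less_irrefl linorder_neqE)

lemma smono_subset: "smono A f \<Longrightarrow> B \<subseteq> A \<Longrightarrow> smono B f"
  unfolding smono_def by blast

lemma smono_less: "smono A f \<Longrightarrow> x \<in> A \<Longrightarrow> y \<in> A \<Longrightarrow> f x < f y \<longleftrightarrow> x < y"
  unfolding smono_def by (metis less_asym linorder_neqE)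

lemma smono_le: "smono A f \<Longrightarrow> x \<in> A \<Longrightarrow> y \<in> A \<Longrightarrow> f x \<le> f y \<longleftrightarrow> x \<le> y"
  by (meson smono_less not_le)


lemma succL_smono: assumes "finite L" shows "smono (lowL L) (succL L)"
  unfolding smono_def
proof (intro ballI impI)
  fix x y assume xy: "x \<in> lowL L" "y \<in> lowL L" "x < y"
  then obtain z where z: "y \<in> L" "z \<in> L" "y < z" "x \<in> L" unfolding lowL_def by auto
  have "succL L x \<le> y" using succL_props(3)[OF assms z(4) z(1) xy(3)] .
  also have "y < succL L y" using succL_props(2)[OF assms z(1,2,3)] .
  finally show "succL L x < succL L y" .
qed

lemma predL_smono: assumes "finite L" shows "smono (highL L) (predL L)"
  unfolding smono_def
proof (intro ballI impI)
  fix x y assume xy: "x \<in> highL L" "y \<in> highL L" "x < y"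
  then obtain z where z: "y \<in> L" "z \<in> L" "z < x" "x \<in> L" unfolding highL_def by auto
  have "predL L x < x" using predL_props(2)[OF assms z(2,4,3)] .
  also have "x \<le> predL L y" using predL_props(3)[OF assms z(4) z(1) xy(3)] .
  finally show "predL L x < predL L y" .
qed

lemma succL_image: assumes "finite L" shows "succL L ` lowL L = highL L"
proof
  show "succL L ` lowL L \<subseteq> highL L"
    unfolding lowL_def highL_def using succL_props[OF assms] by blast
  show "highL L \<subseteq> succL L ` lowL L"
  proof
    fix y assume "y \<in> highL L"
    then obtain x where x: "y \<in> L" "x \<in> L" "x < y" unfolding highL_def by auto
    have "y = succL L (predL L y)" using succ_pred[OF assms x(2,1,3)] by simp
    moreover have "predL L y \<in> lowL L" unfolding lowL_def using predL_props[OF assms x(2,1,3)] x by auto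
    ultimately show "y \<in> succL L ` lowL L" by blast
  qed
qed

lemma predL_image: assumes "finite L" shows "predL L ` highL L = lowL L"
proof
  show "predL L ` highL L \<subseteq> lowL L"
    unfolding lowL_def highL_def using predL_props[OF assms] by blast
  show "lowL L \<subseteq> predL L ` highL L"
  proof
    fix x assume "x \<in> lowL L"
    then obtain y where x: "x \<in> L" "y \<in> L" "x < y" unfolding lowL_def by auto
    have "x = predL L (succL L x)" using pred_succ[OF assms x] by simp
    moreover have "succL L x \<in> highL L" unfolding highL_def using succL_props[OF assms x] x by auto
    ultimately show "x \<in> predL L ` highL L" by blast
  qed
qed

lemma succL_equiv:
  assumes "finite L" "smono L f" "x \<in> L" "y \<in> L" "x < y"
  shows "succL (f ` L) (f x) = f (succL L x)"
proof -
  note s = succL_props[OF assms(1,3,4,5)]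
  show ?thesis unfolding succL_def[of "f ` L"]
  proof (rule Min_eqI)
    show "finite {z \<in> f ` L. f x < z}" using assms by auto
    show "f (succL L x) \<in> {z \<in> f ` L. f x < z}" using s assms smono_less by auto
    fix z assume "z \<in> {z \<in> f ` L. f x < z}"
    then obtain w where w: "w \<in> L" "z = f w" "f x < f w" by auto
    then have "x < w" using smono_less assms by blast
    then have "succL L x \<le> w" using succL_props(3)[OF assms(1,3) w(1)] by simp
    then show "f (succL L x) \<le> z" using w s smono_le assms by blast
  qed
qed

lemma predL_equiv:
  assumes "finite L" "smono L f" "x \<in> L" "y \<in> L" "x < y"
  shows "predL (f ` L) (f y) = f (predL L y)"
proof -
  note s = predL_props[OF assms(1,3,4,5)]
  show ?thesis unfolding predL_def[of "f ` L"]
  proof (rule Max_eqI)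
    show "finite {z \<in> f ` L. z < f y}" using assms by auto
    show "f (predL L y) \<in> {z \<in> f ` L. z < f y}" using s assms smono_less by auto
    fix z assume "z \<in> {z \<in> f ` L. z < f y}"
    then obtain w where w: "w \<in> L" "z = f w" "f w < f y" by auto
    then have "w < y" using smono_less assms by blast
    then have "w \<le> predL L y" using predL_props(3)[OF assms(1) w(1) assms(4)] by simp
    then show "z \<le> f (predL L y)" using w s smono_le assms by blast
  qed
qed

lemma Min_equiv: assumes "finite L" "L \<noteq> {}" "smono L f" shows "Min (f ` L) = f (Min L)"
proof (rule Min_eqI)
  show "finite (f ` L)" using assms by simp
  show "f (Min L) \<in> f ` L" using assms by simp
  fix y assume "y \<in> f ` L"
  then obtain z where "z \<in> L" "y = f z" by auto
  moreover have "Min L \<le> z" using \<open>z \<in> L\<close> assms by simp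
  moreover have "Min L \<in> L" using assms by simp
  ultimately show "f (Min L) \<le> y" using smono_le[OF assms(3)] by blast
qed

lemma Max_equiv: assumes "finite L" "L \<noteq> {}" "smono L f" shows "Max (f ` L) = f (Max L)"
proof (rule Max_eqI)
  show "finite (f ` L)" using assms by simp
  show "f (Max L) \<in> f ` L" using assms by simp
  fix y assume "y \<in> f ` L"
  then obtain z where "z \<in> L" "y = f z" by auto
  moreover have "z \<le> Max L" using \<open>z \<in> L\<close> assms by simp
  moreover have "Max L \<in> L" using assms by simp
  ultimately show "y \<le> f (Max L)" using smono_le[OF assms(3)] by blast
qed


fun dmap :: "(int \<Rightarrow> int) \<Rightarrow> diamond \<Rightarrow> diamond" where
  "dmap f (DSingle a) = DSingle (f a)"
| "dmap f (Dia a b Fs) = Dia (f a) (f b) (map (dmap f) Fs)"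

lemma blabels_bmap: "blabels (bmap f t) = f ` blabels t"
  by (induction t) (auto simp: image_Union)

lemma dlabels_dmap: "dlabels (dmap f F) = f ` dlabels F"
  by (induction F) (auto simp: image_Union)

lemma finite_blabels: "is_bucket_tree t \<Longrightarrow> finite (blabels t)"
proof (induction t)
  case (BNode B ts)
  have "finite B" using BNode.prems by (auto intro: card_ge_0_finite)
  then show ?case using BNode by auto
qed

lemma finite_dlabels: "finite (dlabels F)"
  by (induction F) auto

lemma dlabels_ne: "dlabels F \<noteq> {}"
  by (cases F) auto

lemma bmap_comp: "bmap g (bmap f t) = bmap (g \<circ> f) t"
  by (induction t) (auto simp: image_comp)

lemma dmap_comp: "dmap g (dmap f F) = dmap (g \<circ> f) F"
  by (induction F) auto

lemma bmap_cong: "(\<And>x. x \<in> blabels t \<Longrightarrow> f x = g x) \<Longrightarrow> bmap f t = bmap g t"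
proof (induction t)
  case (BNode B ts)
  have "f ` B = g ` B" using BNode.prems by auto
  moreover have "map (bmap f) ts = map (bmap g) ts"
    using BNode by (intro map_cong) auto
  ultimately show ?case by simp
qed

lemma dmap_cong: "(\<And>x. x \<in> dlabels F \<Longrightarrow> f x = g x) \<Longrightarrow> dmap f F = dmap g F"
proof (induction F)
  case (DSingle a) then show ?case by simp
next
  case (Dia a b Fs)
  have "map (dmap f) Fs = map (dmap g) Fs"
    using Dia by (intro map_cong) auto
  then show ?case using Dia.prems by simp
qed

lemma bmap_id: "bmap id t = t"
  by (induction t) (auto intro: map_idI)

lemma dmap_id: "dmap id F = F"
  by (induction F) (auto intro: map_idI)

lemma bweight_bmap: "inj_on f (blabels t) \<Longrightarrow> bweight \<phi> (bmap f t) = bweight \<phi> t"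
proof (induction t)
  case (BNode B ts)
  have "card (f ` B) = card B" using BNode.prems by (auto intro: card_image inj_on_subset)
  moreover have e: "map (bweight \<phi> \<circ> bmap f) ts = map (bweight \<phi>) ts"
    using BNode by (intro map_cong) (auto intro: inj_on_subset)
  ultimately show ?case by (simp add: e)
qed

lemma cap_bmap: "inj_on f (blabels t) \<Longrightarrow> cap_one_nodes (bmap f t) = cap_one_nodes t"
proof (induction t)
  case (BNode B ts)
  have "card (f ` B) = card B" using BNode.prems by (auto intro: card_image inj_on_subset)
  moreover have e: "map (cap_one_nodes \<circ> bmap f) ts = map cap_one_nodes ts"
    using BNode by (intro map_cong) (auto intro: inj_on_subset)
  ultimately show ?case by (simp add: e)
qed

lemma disj_nth_image:
  assumes "inj_on f (\<Union>t\<in>set ts. lab t)"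
    and "\<forall>i<length ts. \<forall>j<length ts. i \<noteq> j \<longrightarrow> lab (ts ! i) \<inter> lab (ts ! j) = {}"
    and "i < length ts" "j < length ts" "i \<noteq> j"
  shows "f ` lab (ts ! i) \<inter> f ` lab (ts ! j) = {}"
proof -
  have "f ` lab (ts ! i) \<inter> f ` lab (ts ! j) = f ` (lab (ts ! i) \<inter> lab (ts ! j))"
    using assms(1,3,4) by (intro inj_on_image_Int[symmetric]) (auto intro: nth_mem)
  then show ?thesis using assms(2-5) by simp
qed

lemma is_bucket_tree_bmap: "is_bucket_tree t \<Longrightarrow> smono (blabels t) f \<Longrightarrow> is_bucket_tree (bmap f t)"
proof (induction t)
  case (BNode B ts)
  have inj: "inj_on f (blabels (BNode B ts))" using BNode.prems smono_inj by blast
  have cB: "card (f ` B) = card B" using inj by (auto intro: card_image inj_on_subset)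
  have ord: "\<forall>t\<in>set (map (bmap f) ts). \<forall>x\<in>f ` B. \<forall>y\<in>blabels t. x < y"
  proof (intro ballI)
    fix t' x y assume "t' \<in> set (map (bmap f) ts)" "x \<in> f ` B" "y \<in> blabels t'"
    then obtain t x0 y0 where "t \<in> set ts" "x0 \<in> B" "y0 \<in> blabels t" "x = f x0" "y = f y0"
      by (auto simp: blabels_bmap)
    then show "x < y" using BNode.prems smono_less[of "blabels (BNode B ts)" f x0 y0] by auto
  qed
  have dis: "\<forall>i<length (map (bmap f) ts). \<forall>j<length (map (bmap f) ts). i \<noteq> j \<longrightarrow>
      blabels (map (bmap f) ts ! i) \<inter> blabels (map (bmap f) ts ! j) = {}"
  proof (intro allI impI)
    fix i j assume ij: "i < length (map (bmap f) ts)" "j < length (map (bmap f) ts)" "i \<noteq> j"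
    have "inj_on f (\<Union>t\<in>set ts. blabels t)" using inj by (auto intro: inj_on_subset)
    from disj_nth_image[OF this, of i j] ij BNode.prems
    show "blabels (map (bmap f) ts ! i) \<inter> blabels (map (bmap f) ts ! j) = {}"
      by (simp add: blabels_bmap)
  qed
  have ch: "\<forall>t\<in>set (map (bmap f) ts). is_bucket_tree t"
    using BNode by (auto intro: smono_subset)
  show ?case using BNode.prems cB ord dis ch by (simp only: bmap.simps is_bucket_tree.simps; simp)
qed

lemma is_diamond_dmap: "is_diamond F \<Longrightarrow> smono (dlabels F) f \<Longrightarrow> is_diamond (dmap f F)"
proof (induction F)
  case (DSingle a) then show ?case by simp
next
  case (Dia a b Fs)
  have inj: "inj_on f (dlabels (Dia a b Fs))" using Dia.prems smono_inj by blast
  have ab: "f a < f b" using Dia.prems smono_less[of "dlabels (Dia a b Fs)" f a b] by auto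
  have ord: "\<forall>F\<in>set (map (dmap f) Fs). \<forall>x\<in>dlabels F. f a < x \<and> x < f b"
  proof (intro ballI)
    fix F' x assume "F' \<in> set (map (dmap f) Fs)" "x \<in> dlabels F'"
    then obtain F x0 where "F \<in> set Fs" "x0 \<in> dlabels F" "x = f x0"
      by (auto simp: dlabels_dmap)
    then show "f a < x \<and> x < f b" using Dia.prems smono_less[of "dlabels (Dia a b Fs)" f] by auto
  qed
  have dis: "\<forall>i<length (map (dmap f) Fs). \<forall>j<length (map (dmap f) Fs). i \<noteq> j \<longrightarrow>
      dlabels (map (dmap f) Fs ! i) \<inter> dlabels (map (dmap f) Fs ! j) = {}"
  proof (intro allI impI)
    fix i j assume ij: "i < length (map (dmap f) Fs)" "j < length (map (dmap f) Fs)" "i \<noteq> j"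
    have "inj_on f (\<Union>t\<in>set Fs. dlabels t)" using inj by (auto intro: inj_on_subset)
    from disj_nth_image[OF this, of i j] ij Dia.prems
    show "dlabels (map (dmap f) Fs ! i) \<inter> dlabels (map (dmap f) Fs ! j) = {}"
      by (simp add: dlabels_dmap)
  qed
  have ch: "\<forall>F\<in>set (map (dmap f) Fs). is_diamond F"
    using Dia by (auto intro: smono_subset)
  show ?case using ab ord dis ch by (simp only: dmap.simps is_diamond.simps; simp)
qed


fun toB :: "diamond \<Rightarrow> btree" where
  "toB (DSingle a) = BNode {a} []"
| "toB (Dia a b Fs) = BNode {a, succL (dlabels (Dia a b Fs)) a}
     (map (\<lambda>F. bmap (succL (dlabels (Dia a b Fs))) (toB F)) Fs)"

fun toD :: "btree \<Rightarrow> diamond" where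
  "toD (BNode B ts) = (if card B = 1 then DSingle (Min B)
     else Dia (Min (blabels (BNode B ts))) (Max (blabels (BNode B ts)))
       (map (\<lambda>t. dmap (predL (blabels (BNode B ts))) (toD t)) ts))"

lemma dia_struct:
  assumes "is_diamond (Dia a b Fs)"
  defines "L \<equiv> dlabels (Dia a b Fs)" and "U \<equiv> \<Union>F\<in>set Fs. dlabels F"
  shows "a \<in> L" "b \<in> L" "a < b" "L = insert a (insert b U)" "\<forall>x\<in>U. a < x \<and> x < b"
    "lowL L = L - {b}" "highL L = L - {a}" "U = L - {b} - {a}" "finite L"
    "Min L = a" "Max L = b"
proof -
  show "a \<in> L" "b \<in> L" "a < b" "L = insert a (insert b U)" "\<forall>x\<in>U. a < x \<and> x < b"
    using assms by auto
  then show "lowL L = L - {b}" "highL L = L - {a}" "U = L - {b} - {a}" 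
    unfolding lowL_def highL_def by auto
  show fin: "finite L" unfolding L_def by (rule finite_dlabels)
  show "Min L = a" using \<open>L = _\<close> \<open>\<forall>x\<in>U. _\<close> fin \<open>a < b\<close> by (intro Min_eqI) auto
  show "Max L = b" using \<open>L = _\<close> \<open>\<forall>x\<in>U. _\<close> fin \<open>a < b\<close> by (intro Max_eqI) auto
qed

lemma toB_props:
  "is_diamond F \<Longrightarrow> is_bucket_tree (toB F) \<and> blabels (toB F) = dlabels F
     \<and> bweight \<phi> (toB F) = dweight \<phi> F \<and> cap_one_nodes (toB F) = inner_nodes F"
proof (induction F)
  case (DSingle a) then show ?case by simp
next
  case (Dia a b Fs)
  define L where "L = dlabels (Dia a b Fs)"
  define U where "U = (\<Union>F\<in>set Fs. dlabels F)"
  define s where "s = succL L"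
  note st = dia_struct[OF Dia.prems, folded L_def U_def]
  have sm: "smono (L - {b}) s" using succL_smono[OF st(9)] st(6) unfolding s_def by simp
  have inj: "inj_on s (L - {b})" using smono_inj[OF sm] .
  have img: "s ` (L - {b}) = L - {a}" using succL_image[OF st(9)] st(6,7) unfolding s_def by simp
  have sa: "s a \<in> L" "a < s a" using succL_props[OF st(9,1,2,3)] unfolding s_def by auto
  have sU: "s ` U = L - {a} - {s a}"
    unfolding st(8) using inj img st(1,3) by (subst inj_on_image_set_diff[OF inj]) auto
  have IH: "\<And>F. F \<in> set Fs \<Longrightarrow> is_bucket_tree (toB F) \<and> blabels (toB F) = dlabels F
     \<and> bweight \<phi> (toB F) = dweight \<phi> F \<and> cap_one_nodes (toB F) = inner_nodes F"
    using Dia by auto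
  have subU: "\<And>F. F \<in> set Fs \<Longrightarrow> dlabels F \<subseteq> L - {b}" using st(4,5) unfolding U_def by auto
  have eq: "toB (Dia a b Fs) = BNode {a, s a} (map (\<lambda>F. bmap s (toB F)) Fs)"
    by (simp add: s_def L_def)
  have lab: "blabels (toB (Dia a b Fs)) = L"
  proof -
    have "blabels (toB (Dia a b Fs)) = {a, s a} \<union> (\<Union>F\<in>set Fs. s ` dlabels F)"
      unfolding eq using IH by (auto simp: blabels_bmap)
    also have "\<dots> = {a, s a} \<union> s ` U" unfolding U_def by auto
    also have "\<dots> = L" using sU sa st(1) by auto
    finally show ?thesis .
  qed
  have c2: "card {a, s a} = 2" using sa by simp
  have ord: "\<forall>t\<in>set (map (\<lambda>F. bmap s (toB F)) Fs). \<forall>x\<in>{a, s a}. \<forall>y\<in>blabels t. x < y"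
  proof (intro ballI)
    fix t x y assume "t \<in> set (map (\<lambda>F. bmap s (toB F)) Fs)" "x \<in> {a, s a}" "y \<in> blabels t"
    then obtain F z where F: "F \<in> set Fs" "z \<in> dlabels F" "y = s z" "x = a \<or> x = s a"
      using IH by (auto simp: blabels_bmap)
    then have z: "z \<in> L - {b}" "a < z" using subU st(5) unfolding U_def by auto
    have "s a < s z" using smono_less[OF sm, of a z] z st(1,3) by auto
    then show "x < y" using F sa by auto
  qed
  have dis: "\<forall>i<length (map (\<lambda>F. bmap s (toB F)) Fs). \<forall>j<length (map (\<lambda>F. bmap s (toB F)) Fs). i \<noteq> j \<longrightarrow>
      blabels (map (\<lambda>F. bmap s (toB F)) Fs ! i) \<inter> blabels (map (\<lambda>F. bmap s (toB F)) Fs ! j) = {}"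
  proof (intro allI impI)
    fix i j assume ij: "i < length (map (\<lambda>F. bmap s (toB F)) Fs)" "j < length (map (\<lambda>F. bmap s (toB F)) Fs)" "i \<noteq> j"
    have "inj_on s (\<Union>F\<in>set Fs. dlabels F)" using inj subU by (auto intro: inj_on_subset)
    from disj_nth_image[OF this, of i j] ij Dia.prems
    show "blabels (map (\<lambda>F. bmap s (toB F)) Fs ! i) \<inter> blabels (map (\<lambda>F. bmap s (toB F)) Fs ! j) = {}"
      using IH by (simp add: blabels_bmap)
  qed
  have ch: "\<forall>t\<in>set (map (\<lambda>F. bmap s (toB F)) Fs). is_bucket_tree t"
  proof
    fix t assume "t \<in> set (map (\<lambda>F. bmap s (toB F)) Fs)"
    then obtain F where F: "F \<in> set Fs" "t = bmap s (toB F)" by auto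
    have "smono (blabels (toB F)) s" using smono_subset[OF sm] subU[OF F(1)] IH[OF F(1)] by simp
    then show "is_bucket_tree t" using is_bucket_tree_bmap IH[OF F(1)] F(2) by blast
  qed
  have valid: "is_bucket_tree (toB (Dia a b Fs))"
    unfolding eq using c2 ord dis ch by (simp only: is_bucket_tree.simps) simp
  have injF: "inj_on s (blabels (toB F))" if F: "F \<in> set Fs" for F
    using inj_on_subset[OF inj subU[OF F]] IH[OF F] by simp
  have e1: "map (bweight \<phi> \<circ> (\<lambda>F. bmap s (toB F))) Fs = map (dweight \<phi>) Fs"
  proof (rule map_cong)
    fix F assume F: "F \<in> set Fs"
    show "(bweight \<phi> \<circ> (\<lambda>F. bmap s (toB F))) F = dweight \<phi> F"
      using bweight_bmap[OF injF[OF F]] IH[OF F] by simp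
  qed simp
  have e2: "map (cap_one_nodes \<circ> (\<lambda>F. bmap s (toB F))) Fs = map inner_nodes Fs"
  proof (rule map_cong)
    fix F assume F: "F \<in> set Fs"
    show "(cap_one_nodes \<circ> (\<lambda>F. bmap s (toB F))) F = inner_nodes F"
      using cap_bmap[OF injF[OF F]] IH[OF F] by simp
  qed simp
  have w: "bweight \<phi> (toB (Dia a b Fs)) = dweight \<phi> (Dia a b Fs)"
    unfolding eq bweight.simps dweight.simps map_map e1 using c2 by simp
  have c: "cap_one_nodes (toB (Dia a b Fs)) = inner_nodes (Dia a b Fs)"
    unfolding eq cap_one_nodes.simps inner_nodes.simps map_map e2 using c2 by simp
  show ?case using valid lab w c L_def by simp
qed


lemma tree_struct:
  assumes "is_bucket_tree (BNode B ts)" "card B \<noteq> 1"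
  defines "L \<equiv> blabels (BNode B ts)" and "U \<equiv> \<Union>t\<in>set ts. blabels t"
  obtains x y where "B = {x, y}" "x < y" "\<forall>z\<in>U. y < z" "L = insert x (insert y U)"
    "finite L" "Min L = x" "Max L \<in> L" "x < Max L" "lowL L = L - {Max L}" "highL L = L - {x}"
    "succL L x = y" "predL L y = x" "U = L - {x} - {y}"
proof -
  have "card B = 2" using assms by simp
  then obtain u v where uv: "B = {u, v}" "u \<noteq> v" by (auto simp: card_2_iff)
  have "\<exists>x y. B = {x, y} \<and> x < y"
  proof (cases "u < v")
    case True then show ?thesis using uv by blast
  next
    case False then have "v < u" using uv(2) by simp
    then show ?thesis using uv by blast
  qed
  then obtain x y where xy: "B = {x, y}" "x < y" by blast
  have U: "\<forall>z\<in>U. y < z" using assms(1) xy unfolding U_def by auto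
  have L: "L = insert x (insert y U)" using xy unfolding L_def U_def by auto
  have fin: "finite L" unfolding L_def by (rule finite_blabels[OF assms(1)])
  have mn: "Min L = x" using L U xy fin by (intro Min_eqI) auto
  have mxin: "Max L \<in> L" using fin L by (intro Max_in) auto
  have mx: "x < Max L" using fin L xy by (metis Max_ge insertCI order_less_le_trans)
  have mxge: "\<forall>z\<in>L. z \<le> Max L" using fin by auto
  have low: "lowL L = L - {Max L}" unfolding lowL_def using mxge mxin
    by (auto simp: less_le)
  have high: "highL L = L - {x}" unfolding highL_def using L U xy by auto
  have yL: "y \<in> L" "x \<in> L" using L by auto
  have sx: "succL L x = y" unfolding succL_def using fin L U xy by (intro Min_eqI) auto
  have py: "predL L y = x" unfolding predL_def using fin L U xy by (intro Max_eqI) auto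
  have UL: "U = L - {x} - {y}" using L U xy by auto
  show ?thesis using that xy U L fin mn mxin mx low high sx py UL by blast
qed

lemma toD_props:
  "is_bucket_tree T \<Longrightarrow> is_diamond (toD T) \<and> dlabels (toD T) = blabels T"
proof (induction T)
  case (BNode B ts)
  show ?case
  proof (cases "card B = 1")
    case True
    then have "ts = []" using BNode.prems by auto
    moreover obtain c where "B = {c}" using True card_1_singletonE by blast
    ultimately show ?thesis using True by simp
  next
    case False
    define L where "L = blabels (BNode B ts)"
    define U where "U = (\<Union>t\<in>set ts. blabels t)"
    define p where "p = predL L"
    obtain x y where st: "B = {x, y}" "x < y" "\<forall>z\<in>U. y < z" "L = insert x (insert y U)"
      "finite L" "Min L = x" "Max L \<in> L" "x < Max L" "lowL L = L - {Max L}" "highL L = L - {x}"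
      "succL L x = y" "predL L y = x" "U = L - {x} - {y}"
      using tree_struct[OF BNode.prems False] unfolding L_def[symmetric] U_def[symmetric] by blast
    have sm: "smono (L - {x}) p" using predL_smono[OF st(5)] st(10) unfolding p_def by simp
    have inj: "inj_on p (L - {x})" using smono_inj[OF sm] .
    have img: "p ` (L - {x}) = L - {Max L}" using predL_image[OF st(5)] st(9,10) unfolding p_def by simp
    have pU: "p ` U = L - {Max L} - {x}"
      unfolding st(13) using inj img st(12) st(2) st(4) p_def
      by (subst inj_on_image_set_diff[OF inj]) auto
    have IH: "\<And>t. t \<in> set ts \<Longrightarrow> is_diamond (toD t) \<and> dlabels (toD t) = blabels t"
      using BNode by auto
    have subU: "blabels t \<subseteq> L - {x}" if t: "t \<in> set ts" for t
    proof
      fix z assume "z \<in> blabels t"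
      then have "z \<in> U" using t unfolding U_def by blast
      then show "z \<in> L - {x}" using st(2,3,4) by force
    qed
    have eq: "toD (BNode B ts) = Dia x (Max L) (map (\<lambda>t. dmap p (toD t)) ts)"
      using False st(6) by (simp add: p_def L_def)
    have lab: "dlabels (toD (BNode B ts)) = L"
    proof -
      have "dlabels (toD (BNode B ts)) = {x, Max L} \<union> (\<Union>t\<in>set ts. p ` blabels t)"
        unfolding eq using IH by (auto simp: dlabels_dmap)
      also have "\<dots> = {x, Max L} \<union> p ` U" unfolding U_def by auto
      also have "\<dots> = L" using pU st(4) st(7) by auto
      finally show ?thesis .
    qed
    have ord: "\<forall>F\<in>set (map (\<lambda>t. dmap p (toD t)) ts). \<forall>w\<in>dlabels F. x < w \<and> w < Max L"
    proof (intro ballI)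
      fix F w assume "F \<in> set (map (\<lambda>t. dmap p (toD t)) ts)" "w \<in> dlabels F"
      then obtain t z where t: "t \<in> set ts" "z \<in> blabels t" "w = p z"
        using IH by (auto simp: dlabels_dmap)
      then have z: "z \<in> L" "y < z" using st(3,4) unfolding U_def by auto
      have yL: "y \<in> L" using st(4) by auto
      note pp = predL_props[OF st(5) yL z(1) z(2), folded p_def]
      have "z \<le> Max L" using st(5) z(1) by auto
      then show "x < w \<and> w < Max L" using pp t st(2) by auto
    qed
    have dis: "\<forall>i<length (map (\<lambda>t. dmap p (toD t)) ts). \<forall>j<length (map (\<lambda>t. dmap p (toD t)) ts). i \<noteq> j \<longrightarrow>
        dlabels (map (\<lambda>t. dmap p (toD t)) ts ! i) \<inter> dlabels (map (\<lambda>t. dmap p (toD t)) ts ! j) = {}"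
    proof (intro allI impI)
      fix i j assume ij: "i < length (map (\<lambda>t. dmap p (toD t)) ts)" "j < length (map (\<lambda>t. dmap p (toD t)) ts)" "i \<noteq> j"
      have "inj_on p (\<Union>t\<in>set ts. blabels t)" using inj subU by (auto intro: inj_on_subset)
      from disj_nth_image[OF this, of i j] ij BNode.prems
      show "dlabels (map (\<lambda>t. dmap p (toD t)) ts ! i) \<inter> dlabels (map (\<lambda>t. dmap p (toD t)) ts ! j) = {}"
        using IH by (simp add: dlabels_dmap)
    qed
    have ch: "\<forall>F\<in>set (map (\<lambda>t. dmap p (toD t)) ts). is_diamond F"
    proof
      fix F assume "F \<in> set (map (\<lambda>t. dmap p (toD t)) ts)"
      then obtain t where t: "t \<in> set ts" "F = dmap p (toD t)" by auto
      have "smono (dlabels (toD t)) p" using smono_subset[OF sm] subU[OF t(1)] IH[OF t(1)] by simp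
      then show "is_diamond F" using is_diamond_dmap IH[OF t(1)] t(2) by blast
    qed
    have valid: "is_diamond (toD (BNode B ts))"
      unfolding eq is_diamond.simps using st(8) ord dis ch by blast
    show ?thesis using valid lab L_def by simp
  qed
qed


lemma toB_equiv: "is_diamond F \<Longrightarrow> smono (dlabels F) f \<Longrightarrow> toB (dmap f F) = bmap f (toB F)"
proof (induction F)
  case (DSingle a) then show ?case by simp
next
  case (Dia a b Fs)
  define L where "L = dlabels (Dia a b Fs)"
  define s where "s = succL L"
  define s' where "s' = succL (f ` L)"
  note st = dia_struct[OF Dia.prems(1), folded L_def]
  have smL: "smono L f" using Dia.prems L_def by simp
  have dl: "dlabels (Dia (f a) (f b) (map (dmap f) Fs)) = f ` L"
    using dlabels_dmap[of f "Dia a b Fs"] L_def by simp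
  have eq1: "toB (dmap f (Dia a b Fs)) = BNode {f a, s' (f a)} (map (\<lambda>G. bmap s' (toB (dmap f G))) Fs)"
    unfolding s'_def by (simp only: dmap.simps toB.simps dl map_map comp_def)
  have eq2: "bmap f (toB (Dia a b Fs)) = BNode {f a, f (s a)} (map (\<lambda>G. bmap f (bmap s (toB G))) Fs)"
    unfolding s_def L_def by (simp only: toB.simps bmap.simps map_map comp_def image_insert image_empty)
  have sa: "s' (f a) = f (s a)" unfolding s'_def s_def using succL_equiv[OF st(9) smL st(1,2,3)] .
  have ch: "bmap s' (toB (dmap f G)) = bmap f (bmap s (toB G))" if G: "G \<in> set Fs" for G
  proof -
    have sub: "dlabels G \<subseteq> L - {b}" using st(4,5) G unfolding L_def by auto
    have vG: "is_diamond G" using Dia.prems G by auto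
    have "toB (dmap f G) = bmap f (toB G)"
      using Dia.IH[OF G vG] smono_subset[OF smL] sub by blast
    then have "bmap s' (toB (dmap f G)) = bmap (s' \<circ> f) (toB G)" by (simp add: bmap_comp)
    also have "\<dots> = bmap (f \<circ> s) (toB G)"
    proof (rule bmap_cong)
      fix z assume "z \<in> blabels (toB G)"
      then have zG: "z \<in> dlabels G" using toB_props[OF vG] by simp
      then have z: "z \<in> L" "z < b" using sub st(5) G by blast+
      show "(s' \<circ> f) z = (f \<circ> s) z" unfolding s'_def s_def using succL_equiv[OF st(9) smL z(1) st(2) z(2)] by simp
    qed
    also have "\<dots> = bmap f (bmap s (toB G))" by (simp add: bmap_comp)
    finally show ?thesis .
  qed
  show ?case unfolding eq1 eq2 sa using ch by simp
qed

lemma toD_equiv: "is_bucket_tree T \<Longrightarrow> smono (blabels T) f \<Longrightarrow> toD (bmap f T) = dmap f (toD T)"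
proof (induction T)
  case (BNode B ts)
  show ?case
  proof (cases "card B = 1")
    case True
    then have "ts = []" using BNode.prems by auto
    moreover obtain c where "B = {c}" using True card_1_singletonE by blast
    ultimately show ?thesis using True by simp
  next
    case False
    define L where "L = blabels (BNode B ts)"
    define U where "U = (\<Union>t\<in>set ts. blabels t)"
    define p where "p = predL L"
    define p' where "p' = predL (f ` L)"
    obtain x y where st: "B = {x, y}" "x < y" "\<forall>z\<in>U. y < z" "L = insert x (insert y U)"
      "finite L" "Min L = x" "Max L \<in> L" "x < Max L" "lowL L = L - {Max L}" "highL L = L - {x}"
      "succL L x = y" "predL L y = x" "U = L - {x} - {y}"
      using tree_struct[OF BNode.prems(1) False] unfolding L_def[symmetric] U_def[symmetric] by blast
    have smL: "smono L f" using BNode.prems L_def by simp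
    have inj: "inj_on f L" using smono_inj[OF smL] .
    have cf: "card (f ` B) \<noteq> 1" using False inj st(4) st(1) card_image[of f B] inj_on_subset[OF inj, of B]
      by auto
    have bl: "blabels (BNode (f ` B) (map (bmap f) ts)) = f ` L"
      using blabels_bmap[of f "BNode B ts"] L_def by simp
    have Lne: "L \<noteq> {}" using st(4) by auto
    have eq1: "toD (bmap f (BNode B ts)) = Dia (f x) (f (Max L)) (map (\<lambda>t. dmap p' (toD (bmap f t))) ts)"
      unfolding p'_def using cf bl Min_equiv[OF st(5) Lne smL] Max_equiv[OF st(5) Lne smL] st(6)
      by (simp only: bmap.simps toD.simps if_False map_map comp_def)
    have eq2: "dmap f (toD (BNode B ts)) = Dia (f x) (f (Max L)) (map (\<lambda>t. dmap f (dmap p (toD t))) ts)"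
      using False st(6) by (simp only: toD.simps if_False L_def[symmetric] p_def[symmetric] dmap.simps map_map comp_def)
    have ch: "dmap p' (toD (bmap f t)) = dmap f (dmap p (toD t))" if t: "t \<in> set ts" for t
    proof -
      have sub: "blabels t \<subseteq> U" using t unfolding U_def by auto
      have vt: "is_bucket_tree t" using BNode.prems t by auto
      have "toD (bmap f t) = dmap f (toD t)"
        using BNode.IH[OF t vt] smono_subset[OF smL] sub st(4) by blast
      then have "dmap p' (toD (bmap f t)) = dmap (p' \<circ> f) (toD t)" by (simp add: dmap_comp)
      also have "\<dots> = dmap (f \<circ> p) (toD t)"
      proof (rule dmap_cong)
        fix z assume "z \<in> dlabels (toD t)"
        then have "z \<in> U" using toD_props[OF vt] sub by auto
        then have z: "z \<in> L" "x < z" using st(2,3,4) by force+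
        have xL: "x \<in> L" using st(4) by auto
        show "(p' \<circ> f) z = (f \<circ> p) z" unfolding p'_def p_def using predL_equiv[OF st(5) smL xL z(1) z(2)] by simp
      qed
      also have "\<dots> = dmap f (dmap p (toD t))" by (simp add: dmap_comp)
      finally show ?thesis .
    qed
    show ?thesis unfolding eq1 eq2 using ch by simp
  qed
qed


lemma toD_toB: "is_diamond F \<Longrightarrow> toD (toB F) = F"
proof (induction F)
  case (DSingle a) then show ?case by simp
next
  case (Dia a b Fs)
  define L where "L = dlabels (Dia a b Fs)"
  define s where "s = succL L"
  define p where "p = predL L"
  note st = dia_struct[OF Dia.prems, folded L_def]
  have sm: "smono (L - {b}) s" using succL_smono[OF st(9)] st(6) unfolding s_def by simp
  have sa: "s a \<in> L" "a < s a" using succL_props[OF st(9,1,2,3)] unfolding s_def by auto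
  note tp = toB_props[OF Dia.prems, folded L_def]
  have eq: "toB (Dia a b Fs) = BNode {a, s a} (map (\<lambda>F. bmap s (toB F)) Fs)"
    by (simp add: s_def L_def)
  have c2: "card {a, s a} \<noteq> 1" using sa by simp
  have bl0: "blabels (toB (Dia a b Fs)) = L" using tp by blast
  have bl: "blabels (BNode {a, s a} (map (\<lambda>F. bmap s (toB F)) Fs)) = L" using bl0 unfolding eq .
  have eqD: "toD (BNode {a, s a} (map (\<lambda>F. bmap s (toB F)) Fs)) =
      Dia a b (map (\<lambda>t. dmap p (toD t)) (map (\<lambda>F. bmap s (toB F)) Fs))"
    using c2 bl st(10,11) p_def by (simp only: toD.simps if_False)
  have ch: "((\<lambda>t. dmap p (toD t)) \<circ> (\<lambda>F. bmap s (toB F))) G = G" if G: "G \<in> set Fs" for G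
  proof -
    have vG: "is_diamond G" using Dia.prems G by auto
    have sub: "dlabels G \<subseteq> L - {b}" using st(4,5) G unfolding L_def by auto
    note tpG = toB_props[OF vG]
    have smG: "smono (blabels (toB G)) s" using smono_subset[OF sm sub] tpG by simp
    have "toD (bmap s (toB G)) = dmap s (toD (toB G))" using toD_equiv tpG smG by blast
    also have "\<dots> = dmap s G" using Dia.IH[OF G vG] by simp
    finally have "dmap p (toD (bmap s (toB G))) = dmap (p \<circ> s) G" by (simp add: dmap_comp)
    also have "\<dots> = dmap id G"
    proof (rule dmap_cong)
      fix z assume "z \<in> dlabels G"
      then have z: "z \<in> L" "z < b" using sub st(5) G by blast+
      show "(p \<circ> s) z = id z" unfolding p_def s_def using pred_succ[OF st(9) z(1) st(2) z(2)] by simp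
    qed
    also have "\<dots> = G" by (rule dmap_id)
    finally show ?thesis by simp
  qed
  have "map ((\<lambda>t. dmap p (toD t)) \<circ> (\<lambda>F. bmap s (toB F))) Fs = Fs"
    by (rule map_idI) (rule ch)
  then show ?case unfolding eq eqD map_map by simp
qed

lemma toB_toD: "is_bucket_tree T \<Longrightarrow> toB (toD T) = T"
proof (induction T)
  case (BNode B ts)
  show ?case
  proof (cases "card B = 1")
    case True
    then have "ts = []" using BNode.prems by auto
    moreover obtain c where "B = {c}" using True card_1_singletonE by blast
    ultimately show ?thesis using True by simp
  next
    case False
    define L where "L = blabels (BNode B ts)"
    define U where "U = (\<Union>t\<in>set ts. blabels t)"
    define p where "p = predL L"
    define s where "s = succL L"
    obtain x y where st: "B = {x, y}" "x < y" "\<forall>z\<in>U. y < z" "L = insert x (insert y U)"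
      "finite L" "Min L = x" "Max L \<in> L" "x < Max L" "lowL L = L - {Max L}" "highL L = L - {x}"
      "succL L x = y" "predL L y = x" "U = L - {x} - {y}"
      using tree_struct[OF BNode.prems False] unfolding L_def[symmetric] U_def[symmetric] by blast
    have sm: "smono (L - {x}) p" using predL_smono[OF st(5)] st(10) unfolding p_def by simp
    note tdp = toD_props[OF BNode.prems, folded L_def]
    have eqD: "toD (BNode B ts) = Dia x (Max L) (map (\<lambda>t. dmap p (toD t)) ts)"
      using False st(6) by (simp add: p_def L_def)
    have dl0: "dlabels (toD (BNode B ts)) = L" using tdp by blast
    have dl: "dlabels (Dia x (Max L) (map (\<lambda>t. dmap p (toD t)) ts)) = L" using dl0 unfolding eqD .
    have eqB: "toB (Dia x (Max L) (map (\<lambda>t. dmap p (toD t)) ts)) =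
        BNode {x, y} (map (\<lambda>F. bmap s (toB F)) (map (\<lambda>t. dmap p (toD t)) ts))"
      using dl st(11) s_def by (simp only: toB.simps)
    have ch: "((\<lambda>F. bmap s (toB F)) \<circ> (\<lambda>t. dmap p (toD t))) t = t" if t: "t \<in> set ts" for t
    proof -
      have vt: "is_bucket_tree t" using BNode.prems t by auto
      have sub: "blabels t \<subseteq> L - {x}"
      proof
        fix z assume "z \<in> blabels t"
        then have "z \<in> U" using t unfolding U_def by blast
        then show "z \<in> L - {x}" using st(2,3,4) by force
      qed
      note tdt = toD_props[OF vt]
      have smt: "smono (dlabels (toD t)) p" using smono_subset[OF sm sub] tdt by simp
      have "toB (dmap p (toD t)) = bmap p (toB (toD t))" using toB_equiv tdt smt by blast
      also have "\<dots> = bmap p t" using BNode.IH[OF t vt] by simp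
      finally have "bmap s (toB (dmap p (toD t))) = bmap (s \<circ> p) t" by (simp add: bmap_comp)
      also have "\<dots> = bmap id t"
      proof (rule bmap_cong)
        fix z assume "z \<in> blabels t"
        then have "z \<in> U" using t unfolding U_def by blast
        then have z: "z \<in> L" "x < z" using st(2,3,4) by force+
        have xL: "x \<in> L" using st(4) by blast
        show "(s \<circ> p) z = id z" unfolding p_def s_def using succ_pred[OF st(5) xL z(1) z(2)] by simp
      qed
      also have "\<dots> = t" by (rule bmap_id)
      finally show ?thesis by simp
    qed
    have mi: "map ((\<lambda>F. bmap s (toB F)) \<circ> (\<lambda>t. dmap p (toD t))) ts = ts"
      by (rule map_idI) (rule ch)
    have "toB (toD (BNode B ts)) = BNode {x, y} (map ((\<lambda>F. bmap s (toB F)) \<circ> (\<lambda>t. dmap p (toD t))) ts)"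
      unfolding eqD eqB map_map ..
    then show ?thesis unfolding mi st(1) .
  qed
qed


lemma part2:
  "(\<Sum>F\<in>{F\<in>diamonds_of_size n. inner_nodes F = k}. dweight \<phi> F)
     = (\<Sum>T\<in>{T\<in>bucket_trees_of_size n. cap_one_nodes T = k}. bweight \<phi> T)"
  "(\<Sum>F\<in>diamonds_of_size n. dweight \<phi> F) = (\<Sum>T\<in>bucket_trees_of_size n. bweight \<phi> T)"
proof -
  show "(\<Sum>F\<in>{F\<in>diamonds_of_size n. inner_nodes F = k}. dweight \<phi> F)
     = (\<Sum>T\<in>{T\<in>bucket_trees_of_size n. cap_one_nodes T = k}. bweight \<phi> T)"
  proof (rule sum.reindex_bij_witness[where i = toD and j = toB])
    fix F assume F: "F \<in> {F\<in>diamonds_of_size n. inner_nodes F = k}"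
    then have v: "is_diamond F" unfolding diamonds_of_size_def by simp
    note tp = toB_props[OF v, of \<phi>]
    show "toD (toB F) = F" using toD_toB[OF v] .
    show "toB F \<in> {T\<in>bucket_trees_of_size n. cap_one_nodes T = k}"
      using F tp unfolding diamonds_of_size_def bucket_trees_of_size_def by simp
    show "bweight \<phi> (toB F) = dweight \<phi> F" using tp by simp
  next
    fix T assume T: "T \<in> {T\<in>bucket_trees_of_size n. cap_one_nodes T = k}"
    then have v: "is_bucket_tree T" unfolding bucket_trees_of_size_def by simp
    note tp = toD_props[OF v]
    note tp2 = toB_props[OF conjunct1[OF tp], of \<phi>]
    show "toB (toD T) = T" using toB_toD[OF v] .
    show "toD T \<in> {F\<in>diamonds_of_size n. inner_nodes F = k}"
      using T tp tp2 toB_toD[OF v] unfolding diamonds_of_size_def bucket_trees_of_size_def by simp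
  qed
  show "(\<Sum>F\<in>diamonds_of_size n. dweight \<phi> F) = (\<Sum>T\<in>bucket_trees_of_size n. bweight \<phi> T)"
  proof (rule sum.reindex_bij_witness[where i = toD and j = toB])
    fix F assume F: "F \<in> diamonds_of_size n"
    then have v: "is_diamond F" unfolding diamonds_of_size_def by simp
    note tp = toB_props[OF v, of \<phi>]
    show "toD (toB F) = F" using toD_toB[OF v] .
    show "toB F \<in> bucket_trees_of_size n"
      using F tp unfolding diamonds_of_size_def bucket_trees_of_size_def by simp
    show "bweight \<phi> (toB F) = dweight \<phi> F" using tp by simp
  next
    fix T assume T: "T \<in> bucket_trees_of_size n"
    then have v: "is_bucket_tree T" unfolding bucket_trees_of_size_def by simp
    note tp = toD_props[OF v]
    show "toB (toD T) = T" using toB_toD[OF v] .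
    show "toD T \<in> diamonds_of_size n"
      using T tp unfolding diamonds_of_size_def bucket_trees_of_size_def by simp
  qed
qed


theorem mainTheorem3:
  fixes \<phi> :: "nat \<Rightarrow> real"
  assumes "\<And>k. \<phi> k \<ge> 0" and "\<phi> 0 > 0"
  shows "(\<forall>F. is_diamond F \<longrightarrow> inner_nodes F = cap_one_nodes (M F))
    \<and> (\<forall>n::nat. n \<ge> 1 \<longrightarrow> (\<forall>k::nat.
         (\<Sum>F\<in>{F\<in>diamonds_of_size n. inner_nodes F = k}. dweight \<phi> F)
           / (\<Sum>F\<in>diamonds_of_size n. dweight \<phi> F)
       = (\<Sum>T\<in>{T\<in>bucket_trees_of_size n. cap_one_nodes T = k}. bweight \<phi> T)
           / (\<Sum>T\<in>bucket_trees_of_size n. bweight \<phi> T)))"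
  using part1 part2 by simp

end
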